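(* Consider Algorithm MWHVC (described in the context) run on a hypergraph $G=(V,E)$ of rank $f$ with nonnegative vertex weights $w$, with parameters $\varepsilon\in(0,1]$, $\beta=\varepsilon/(f+\varepsilon)$ and multiplier $\alpha>1$. For every vertex $v$, the number of $v$-stuck iterations is at most $\alpha/\beta$.
   Context: Let $G=(V,E)$ be a hypergraph: each hyperedge is a nonempty subset of $V$ of size at most $f$ (rank $f$). Vertices have nonnegative weights $w(v)$. For $v\in V$, $E(v)=\{e\in E: v\in e\}$; $\Delta=\max_v |E(v)|\ge 3$. A hyperedge $e$ is covered by $C\subseteq V$ if $e\cap C\neq\emptyset$. The computation is distributed in synchronous rounds on the bipartite network with node set $V\cup E$ and a link between $v$ and $e$ iff $v\in e$. Parameters: $\varepsilon\in(0,1]$, $\beta=\varepsilon/(f+\varepsilon)$, and a multiplier $\alpha>1$. Algorithm MWHVC: Initialize $C\gets\emptyset$ and $E'(v)\gets E(v)$ for every $v$. Iteration $0$: every hyperedge $e$ sets $\mathrm{deal}_0(e)=\beta\cdot\min_{v\in e} w(v)/|E(v)|$ and $\delta_0(e)=\mathrm{deal}_0(e)$. For $i=1,2,\dots$: (a) every vertex $v\notin C$ (not terminated) checks whether $\sum_{e\in E(v)}\delta_{i-1}(e)\ge(1-\beta)w(v)$; if so, $v$ joins $C$, tells every $e\in E'(v)$ that $e$ is covered, and terminates. (b) Every uncovered hyperedge that receives such a message becomes covered, informs all its vertices, and terminates. (c) Every vertex $v\notin C$ that is told $e$ is covered sets $E'(v)\gets E'(v)\setminus\{e\}$; if $E'(v)=\emptyset$,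 $v$ terminates without joining $C$. (d) Every vertex $v\notin C$ sends "raise" to all $e\in E'(v)$ if $\sum_{e\in E'(v)}\mathrm{deal}_{i-1}(e)\le(\beta/\alpha)w(v)$, and otherwise sends "stuck" to all $e\in E'(v)$. (e) Every uncovered hyperedge $e$ sets $\mathrm{deal}_i(e)=\mathrm{deal}_{i-1}(e)$ if it received some "stuck" message, and $\mathrm{deal}_i(e)=\alpha\cdot\mathrm{deal}_{i-1}(e)$ otherwise, and $\delta_i(e)=\delta_{i-1}(e)+\mathrm{deal}_i(e)$. An iteration $i$ is a $v$-stuck iteration if $v$ sends the message "stuck" in step (d) of iteration $i$. *)

theory Defs
  imports Complex_Main
begin

definition incE :: "'v set set \<Rightarrow> 'v \<Rightarrow> 'v set set" where
  "incE E v = {e \<in> E. v \<in> e}"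

record 'v mwhvc_state =
  cover :: "'v set"
  terminated :: "'v set"
  covered :: "'v set set"
  Ep :: "'v \<Rightarrow> 'v set set"
  deal :: "'v set \<Rightarrow> real"
  delta :: "'v set \<Rightarrow> real"

definition init_state :: "'v set set \<Rightarrow> ('v \<Rightarrow> real) \<Rightarrow> real \<Rightarrow> 'v mwhvc_state" where
  "init_state E w \<beta> =
     (let d = (\<lambda>e. \<beta> * Min ((\<lambda>v. w v / real (card (incE E v))) ` e)) in
     \<lparr> cover = {}, terminated = {}, covered = {}, Ep = incE E, deal = d, delta = d \<rparr>)"

definition joiners :: "'v set \<Rightarrow> 'v set set \<Rightarrow> ('v \<Rightarrow> real) \<Rightarrow> real \<Rightarrow> 'v mwhvc_state \<Rightarrow> 'v set" where
  "joiners V E w \<beta> s =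
     {v \<in> V. v \<notin> terminated s \<and> (\<Sum>e\<in>incE E v. delta s e) \<ge> (1 - \<beta>) * w v}"

definition newcov :: "'v set \<Rightarrow> 'v set set \<Rightarrow> ('v \<Rightarrow> real) \<Rightarrow> real \<Rightarrow> 'v mwhvc_state \<Rightarrow> 'v set set" where
  "newcov V E w \<beta> s =
     {e \<in> E. e \<notin> covered s \<and> (\<exists>u \<in> joiners V E w \<beta> s. e \<in> Ep s u)}"

definition Ep_c :: "'v set \<Rightarrow> 'v set set \<Rightarrow> ('v \<Rightarrow> real) \<Rightarrow> real \<Rightarrow> 'v mwhvc_state \<Rightarrow> 'v \<Rightarrow> 'v set set" where
  "Ep_c V E w \<beta> s v =
     (if v \<in> terminated s \<or> v \<in> joiners V E w \<beta> s then Ep s v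
      else Ep s v - newcov V E w \<beta> s)"

definition term_c :: "'v set \<Rightarrow> 'v set set \<Rightarrow> ('v \<Rightarrow> real) \<Rightarrow> real \<Rightarrow> 'v mwhvc_state \<Rightarrow> 'v set" where
  "term_c V E w \<beta> s =
     terminated s \<union> joiners V E w \<beta> s \<union>
     {v \<in> V. v \<notin> terminated s \<and> v \<notin> joiners V E w \<beta> s \<and>
            (\<exists>e \<in> newcov V E w \<beta> s. v \<in> e) \<and> Ep_c V E w \<beta> s v = {}}"

definition stuck_set :: "'v set \<Rightarrow> 'v set set \<Rightarrow> ('v \<Rightarrow> real) \<Rightarrow> real \<Rightarrow> real \<Rightarrow> 'v mwhvc_state \<Rightarrow> 'v set" where
  "stuck_set V E w \<beta> \<alpha> s =
     {v \<in> V. v \<notin> term_c V E w \<beta> s \<and>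
            (\<Sum>e\<in>Ep_c V E w \<beta> s v. deal s e) > (\<beta> / \<alpha>) * w v}"

definition mwhvc_step :: "'v set \<Rightarrow> 'v set set \<Rightarrow> ('v \<Rightarrow> real) \<Rightarrow> real \<Rightarrow> real \<Rightarrow> 'v mwhvc_state \<Rightarrow> 'v mwhvc_state" where
  "mwhvc_step V E w \<beta> \<alpha> s =
     (let J = joiners V E w \<beta> s;
          Cov = covered s \<union> newcov V E w \<beta> s;
          S = stuck_set V E w \<beta> \<alpha> s;
          Epc = Ep_c V E w \<beta> s;
          d = (\<lambda>e. if e \<in> E \<and> e \<notin> Cov then
                      (if (\<exists>v \<in> S. e \<in> Epc v) then deal s e else \<alpha> * deal s e)
                    else deal s e);
          dl = (\<lambda>e. if e \<in> E \<and> e \<notin> Cov then delta s e + d e else delta s e)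
      in \<lparr> cover = cover s \<union> J, terminated = term_c V E w \<beta> s, covered = Cov,
           Ep = Epc, deal = d, delta = dl \<rparr>)"

fun state_after :: "'v set \<Rightarrow> 'v set set \<Rightarrow> ('v \<Rightarrow> real) \<Rightarrow> real \<Rightarrow> real \<Rightarrow> nat \<Rightarrow> 'v mwhvc_state" where
  "state_after V E w \<beta> \<alpha> 0 = init_state E w \<beta>"
| "state_after V E w \<beta> \<alpha> (Suc i) = mwhvc_step V E w \<beta> \<alpha> (state_after V E w \<beta> \<alpha> i)"

definition stuck_iteration :: "'v set \<Rightarrow> 'v set set \<Rightarrow> ('v \<Rightarrow> real) \<Rightarrow> real \<Rightarrow> real \<Rightarrow> 'v \<Rightarrow> nat \<Rightarrow> bool" where
  "stuck_iteration V E w \<beta> \<alpha> v i \<longleftrightarrow>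
     i \<ge> 1 \<and> v \<in> stuck_set V E w \<beta> \<alpha> (state_after V E w \<beta> \<alpha> (i - 1))"

end

theory Submission
  imports Defs
begin

lemma step_deal_nonneg:
  assumes "\<forall>e\<in>E. deal s e \<ge> 0" "\<alpha> > 1"
  shows "\<forall>e\<in>E. deal (mwhvc_step V E w \<beta> \<alpha> s) e \<ge> 0"
  using assms by (auto simp: mwhvc_step_def Let_def)

lemma step_delta_mono:
  assumes "\<forall>e\<in>E. deal s e \<ge> 0" "\<alpha> > 1"
  shows "\<forall>e\<in>E. delta (mwhvc_step V E w \<beta> \<alpha> s) e \<ge> delta s e"
  using assms by (auto simp: mwhvc_step_def Let_def)

lemma step_Ep:
  assumes "\<forall>u. Ep s u \<subseteq> incE E u"
  shows "\<forall>u. Ep (mwhvc_step V E w \<beta> \<alpha> s) u \<subseteq> incE E u"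
  using assms by (auto simp: mwhvc_step_def Let_def Ep_c_def)

lemma step_cov:
  assumes "\<forall>u. u \<notin> terminated s \<longrightarrow> Ep s u \<inter> covered s = {}"
  shows "\<forall>u. u \<notin> terminated (mwhvc_step V E w \<beta> \<alpha> s) \<longrightarrow>
     Ep (mwhvc_step V E w \<beta> \<alpha> s) u \<inter> covered (mwhvc_step V E w \<beta> \<alpha> s) = {}"
  using assms by (auto simp: mwhvc_step_def Let_def Ep_c_def term_c_def)

lemma step_stuck:
  assumes dn: "\<forall>e\<in>E. deal s e \<ge> 0" and a: "\<alpha> > 1"
    and st: "v \<in> stuck_set V E w \<beta> \<alpha> s"
    and ep: "\<forall>u. Ep s u \<subseteq> incE E u" and fin: "finite E"
    and cv: "\<forall>u. u \<notin> terminated s \<longrightarrow> Ep s u \<inter> covered s = {}"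
  shows "sum (delta (mwhvc_step V E w \<beta> \<alpha> s)) (incE E v)
         \<ge> sum (delta s) (incE E v) + sum (deal s) (Ep_c V E w \<beta> s v)"
proof -
  let ?s' = "mwhvc_step V E w \<beta> \<alpha> s"
  let ?A = "Ep_c V E w \<beta> s v"
  have nt: "v \<notin> terminated s" "v \<notin> joiners V E w \<beta> s"
    using st by (auto simp: stuck_set_def term_c_def)
  have Aeq: "?A = Ep s v - newcov V E w \<beta> s" using nt by (simp add: Ep_c_def)
  have sub: "?A \<subseteq> incE E v" using Aeq ep by auto
  have finI: "finite (incE E v)" using fin by (simp add: incE_def)
  have finA: "finite ?A" using finite_subset[OF sub finI] .
  have inc: "\<forall>e\<in>incE E v. delta ?s' e \<ge> delta s e"
    using step_delta_mono[OF dn a] by (auto simp: incE_def)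
  have incA: "\<forall>e\<in>?A. delta ?s' e \<ge> delta s e + deal s e"
  proof
    fix e assume e: "e \<in> ?A"
    have eE: "e \<in> E" using e sub by (auto simp: incE_def)
    have c1: "e \<notin> covered s" using cv nt e Aeq by auto
    have c2: "e \<notin> newcov V E w \<beta> s" using e Aeq by auto
    have d: "deal s e \<ge> 0" using dn eE by auto
    have "\<alpha> * deal s e \<ge> deal s e" using a d by (simp add: mult_le_cancel_right1)
    then show "delta ?s' e \<ge> delta s e + deal s e"
      using eE c1 c2 by (auto simp: mwhvc_step_def Let_def)
  qed
  have "sum (delta ?s') (incE E v) = sum (delta ?s') ?A + sum (delta ?s') (incE E v - ?A)"
    using sum.subset_diff[OF sub finI] by (simp add: add.commute)
  also have "\<dots> \<ge> (sum (delta s) ?A + sum (deal s) ?A) + sum (delta s) (incE E v - ?A)"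
    apply (rule add_mono)
    using incA inc sum_mono[of ?A "\<lambda>e. delta s e + deal s e" "delta ?s'"]
    by (auto simp: sum.distrib intro!: sum_mono)
  finally show ?thesis
    using sum.subset_diff[OF sub finI, of "delta s"] by (simp add: algebra_simps)
qed


theorem mainTheorem5:
  fixes V :: "'v set" and E :: "'v set set" and w :: "'v \<Rightarrow> real"
    and f :: nat and \<epsilon> \<alpha> \<beta> :: real and v :: 'v
  assumes "finite V"
    and "\<forall>e \<in> E. e \<noteq> {} \<and> e \<subseteq> V \<and> card e \<le> f"
    and "\<forall>u \<in> V. w u \<ge> 0"
    and "\<exists>u \<in> V. card (incE E u) \<ge> 3"
    and "0 < \<epsilon>" and "\<epsilon> \<le> 1"
    and "\<beta> = \<epsilon> / (real f + \<epsilon>)"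
    and "\<alpha> > 1"
    and "v \<in> V"
  shows "finite {i. stuck_iteration V E w \<beta> \<alpha> v i}
       \<and> real (card {i. stuck_iteration V E w \<beta> \<alpha> v i}) \<le> \<alpha> / \<beta>"
proof -
  note A = assms
  let ?st = "state_after V E w \<beta> \<alpha>"
  define S where "S = {i. stuck_iteration V E w \<beta> \<alpha> v i}"
  define D where "D n = sum (delta (?st n)) (incE E v)" for n
  have finE: "finite E"
  proof -
    have "E \<subseteq> Pow V" using A(2) by auto
    then show ?thesis using A(1) finite_subset by blast
  qed
  obtain u where u: "u \<in> V" "card (incE E u) \<ge> 3" using A(4) by blast
  then obtain e0 where e0: "e0 \<in> E" by (metis (no_types, lifting) card.empty empty_iff
        incE_def mem_Collect_eq not_numeral_le_zero subsetI subset_empty)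
  have "finite e0" using e0 A(1,2) finite_subset by blast
  then have "card e0 \<ge> 1" using e0 A(2) by (simp add: Suc_leI card_gt_0_iff)
  then have f1: "real f \<ge> 1" using e0 A(2) by fastforce
  have bpos: "\<beta> > 0" using A(5,7) f1 by simp
  have blt: "\<beta> < 1" using A(5,7) f1 by (simp add: divide_less_eq)
  have init_deal: "\<forall>e\<in>E. deal (?st 0) e \<ge> 0"
  proof
    fix e assume e: "e \<in> E"
    have fe: "finite e" using e A(1,2) finite_subset by blast
    have ne: "e \<noteq> {}" using e A(2) by auto
    have "Min ((\<lambda>v. w v / real (card (incE E v))) ` e) \<ge> 0"
      using fe ne e A(2,3) by (subst Min_ge_iff) (auto intro!: divide_nonneg_nonneg)
    then show "deal (?st 0) e \<ge> 0" using bpos by (simp add: init_state_def Let_def)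
  qed
  have inv: "(\<forall>e\<in>E. deal (?st n) e \<ge> 0) \<and> (\<forall>u. Ep (?st n) u \<subseteq> incE E u)
      \<and> (\<forall>u. u \<notin> terminated (?st n) \<longrightarrow> Ep (?st n) u \<inter> covered (?st n) = {})" for n
  proof (induction n)
    case 0
    then show ?case using init_deal by (simp add: init_state_def Let_def)
  next
    case (Suc n)
    have a: "\<forall>e\<in>E. deal (?st n) e \<ge> 0" "\<forall>u. Ep (?st n) u \<subseteq> incE E u"
      "\<forall>u. u \<notin> terminated (?st n) \<longrightarrow> Ep (?st n) u \<inter> covered (?st n) = {}"
      using Suc by auto
    show ?case using step_deal_nonneg[OF a(1) A(8), of V w \<beta>] step_Ep[OF a(2), of V w \<beta> \<alpha>]
      step_cov[OF a(3), of V E w \<beta> \<alpha>]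
      by simp
  qed
  have Dmono: "D n \<le> D (Suc n)" for n
  proof -
    have "\<forall>e\<in>E. delta (?st n) e \<le> delta (?st (Suc n)) e"
      using inv[of n] step_delta_mono[OF _ A(8), of E "?st n" V w \<beta>] by simp
    then show ?thesis unfolding D_def by (auto simp: incE_def intro!: sum_mono)
  qed
  have D0: "D 0 \<ge> 0"
    unfolding D_def using init_deal
    by (auto simp: incE_def init_state_def Let_def intro!: sum_nonneg)
  have Dnn: "D n \<ge> 0" for n
    by (induction n) (use D0 Dmono order_trans in auto)
  define c where "c = \<beta> / \<alpha> * w v"
  have cnn: "c \<ge> 0" using A(3,9) bpos A(8) by (simp add: c_def)
  have Dstuck: "D (Suc n) \<ge> D n + c" if "Suc n \<in> S" for n
  proof -
    have sv: "v \<in> stuck_set V E w \<beta> \<alpha> (?st n)" using that by (simp add: S_def stuck_iteration_def)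
    have "D (Suc n) \<ge> D n + sum (deal (?st n)) (Ep_c V E w \<beta> (?st n) v)"
      unfolding D_def using step_stuck[OF _ A(8) sv _ finE] inv[of n] by simp
    moreover have "sum (deal (?st n)) (Ep_c V E w \<beta> (?st n) v) > c"
      using sv by (simp add: stuck_set_def c_def)
    ultimately show ?thesis by simp
  qed
  have Djoin: "D n < (1 - \<beta>) * w v" if "Suc n \<in> S" for n
  proof -
    have sv: "v \<in> stuck_set V E w \<beta> \<alpha> (?st n)" using that by (simp add: S_def stuck_iteration_def)
    then have "v \<notin> joiners V E w \<beta> (?st n)" "v \<notin> terminated (?st n)"
      by (auto simp: stuck_set_def term_c_def)
    then show ?thesis using A(9) by (auto simp: joiners_def D_def)
  qed
  have S0: "0 \<notin> S" by (simp add: S_def stuck_iteration_def)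
  have cnt: "D n \<ge> c * card (S \<inter> {..n})" for n
  proof (induction n)
    case 0
    have "S \<inter> {..0} = {}" using S0 by auto
    then show ?case using D0 by simp
  next
    case (Suc n)
    show ?case
    proof (cases "Suc n \<in> S")
      case True
      have "S \<inter> {..Suc n} = insert (Suc n) (S \<inter> {..n})" using True by (auto simp: le_Suc_eq)
      then have "card (S \<inter> {..Suc n}) = Suc (card (S \<inter> {..n}))" by simp
      then show ?thesis using Suc Dstuck[OF True] by (simp add: algebra_simps)
    next
      case False
      have "S \<inter> {..Suc n} = S \<inter> {..n}" using False by (auto simp: le_Suc_eq)
      then show ?thesis using Suc Dmono[of n] by simp
    qed
  qed
  have bound: "real (card (S \<inter> {..i})) < \<alpha> / \<beta>" if "i \<in> S" for i
  proof -
    have "i \<noteq> 0"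
    proof
      assume "i = 0"
      then show False using that S0 by simp
    qed
    then obtain n where n: "i = Suc n" using not0_implies_Suc by blast
    have ins: "S \<inter> {..i} = insert i (S \<inter> {..n})" using that n by (auto simp: le_Suc_eq)
    have fn: "finite (S \<inter> {..n})" by simp
    have ni: "i \<notin> S \<inter> {..n}" using n by simp
    have ci: "card (S \<inter> {..i}) = Suc (card (S \<inter> {..n}))"
      unfolding ins using card_insert_disjoint[OF fn ni] .
    define k where "k = real (card (S \<inter> {..n}))"
    have lt: "c * k \<le> D n" using cnt[of n] by (simp add: k_def)
    have lt2: "D n < (1 - \<beta>) * w v" using Djoin[of n] that n by simp
    have wv0: "w v \<ge> 0" using A(3,9) by simp
    have wpos: "w v > 0"
    proof (rule ccontr)
      assume "\<not> w v > 0"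
      then have "w v = 0" using wv0 by simp
      then show False using lt2 Dnn[of n] by simp
    qed
    have "c * k < (1 - \<beta>) * w v" using lt lt2 by linarith
    then have "(\<beta> / \<alpha> * k) * w v < (1 - \<beta>) * w v" unfolding c_def by (simp add: algebra_simps)
    then have "\<beta> / \<alpha> * k < 1 - \<beta>" by (simp only: mult_less_cancel_right_pos[OF wpos])
    then have "\<beta> * k < \<alpha> * (1 - \<beta>)"
      using A(8) by (simp add: field_simps)
    then have "k < \<alpha> * (1 - \<beta>) / \<beta>"
      using bpos by (simp add: field_simps)
    also have "\<dots> = \<alpha> / \<beta> - \<alpha>" using bpos by (simp add: field_simps)
    finally have "k + 1 < \<alpha> / \<beta>" using A(8) by simp
    then show ?thesis using ci k_def by simp
  qed
  have finS: "finite S"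
  proof (rule ccontr)
    assume inf: "infinite S"
    obtain B where B: "finite B" "card B = nat \<lceil>\<alpha> / \<beta>\<rceil> + 1" "B \<subseteq> S"
      using infinite_arbitrarily_large[OF inf, of "nat \<lceil>\<alpha> / \<beta>\<rceil> + 1"] by blast
    have Bne: "B \<noteq> {}" using B by auto
    define i where "i = Max B"
    have iS: "i \<in> S" using B Bne i_def Max_in by blast
    have "B \<subseteq> S \<inter> {..i}" using B(3) i_def Max_ge[OF B(1)] by blast
    then have "card B \<le> card (S \<inter> {..i})" by (intro card_mono) auto
    then have "real (card B) \<le> real (card (S \<inter> {..i}))" by simp
    moreover have "real (card B) \<ge> \<alpha> / \<beta>"
    proof -
      have "\<alpha> / \<beta> \<le> real (nat \<lceil>\<alpha> / \<beta>\<rceil>)" by (rule real_nat_ceiling_ge)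
      then show ?thesis using B(2) by simp
    qed
    ultimately show False using bound[OF iS] by simp
  qed
  have "real (card S) \<le> \<alpha> / \<beta>"
  proof (cases "S = {}")
    case True
    then show ?thesis using bpos A(8) by simp
  next
    case False
    define i where "i = Max S"
    have iS: "i \<in> S" using finS False i_def Max_in by blast
    have "S \<inter> {..i} = S" using Max_ge[OF finS] i_def by blast
    then show ?thesis using bound[OF iS] by simp
  qed
  then show ?thesis using finS S_def by simp
qed

end
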